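(* Let $L\ge 3$, and let $G=(V,E)$, $B$ and the plaquettes be those of the planar surface code defined below. Let $D\subseteq V\setminus B$ be arbitrary (of any parity). Then $G$ has a minimum-size $D$-join $J$ relative to $B$ such that every vertex of $D$ has $J$-degree exactly $1$. More specifically, if $J$ is any minimum-size $D$-join of $G$ relative to $B$, then there is a set $P$ of plaquettes such that $J' = J\oplus\bigoplus_{f\in P}\partial f$ satisfies $|J'|=|J|$ and every vertex of $D$ has $J'$-degree exactly $1$.
   Context: Vertex set: $V=\{0,1,\dots,L\}\times\{0,1,\dots,L-1\}$. Edge set: $E$ consists of all horizontal edges $\{(x,y),(x+1,y)\}$ with $0\le x\le L-1$, together with the vertical edges $\{(x,y),(x,y+1)\}$ with $1\le x\le L-1$ and $0\le y\le L-2$. Equivalently, these are the unit grid edges except the vertical edges on the two sides $x=0$ and $x=L$. Boundary vertices: $B=\{(x,y)\in V: x\in\{0,L\}\}$. Plaquettes: for $0\le x\le L-1$ and $0\le y\le L-2$, the plaquette $f_{x,y}$ is the unit square with corners $(x,y),(x+1,y),(x,y+1),(x+1,y+1)$. Its relative boundary $\partial f_{x,y}$ is the set of its four sides that belong to $E$. The symbol $\oplus$ denotes symmetric difference. For $J\subseteq E$, the $J$-degree of a vertex is the number of edges of $J$ incident to it. For disjoint $B,D\subseteq V$, a $D$-join relative to $B$ is a set $J\subseteq E$ such that every vertex of $D$ has odd $J$-degree and every vertex of $V\setminus(D\cup B)$ has even $J$-degree; vertices of $B$ are unconstrained. This is the $[[2L^2-2L+1,1,L]]$ planar surface code: qubits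 are the edges in $E$, $X$-checks are the vertices in $V\setminus B$ (support = incident edges), and $Z$-checks are the plaquettes (support = relative boundary). Its dual lattice is isomorphic to this one. *)

theory Defs
  imports Main
begin

type_synonym vtx = "nat \<times> nat"
type_synonym edge = "vtx set"

definition sc_V :: "nat \<Rightarrow> vtx set" where
  "sc_V L = {(x, y). x \<le> L \<and> y < L}"

definition sc_E :: "nat \<Rightarrow> edge set" where
  "sc_E L =
     {{(x, y), (x + 1, y)} | x y. x < L \<and> y < L} \<union>
     {{(x, y), (x, y + 1)} | x y. 1 \<le> x \<and> x + 1 \<le> L \<and> y + 2 \<le> L}"

definition sc_B :: "nat \<Rightarrow> vtx set" where
  "sc_B L = {(x, y) \<in> sc_V L. x = 0 \<or> x = L}"

definition sc_F :: "nat \<Rightarrow> (nat \<times> nat) set" where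
  "sc_F L = {(x, y). x < L \<and> y + 2 \<le> L}"

definition sc_pbd :: "nat \<Rightarrow> nat \<times> nat \<Rightarrow> edge set" where
  "sc_pbd L f = (case f of (x, y) \<Rightarrow>
     {{(x, y), (x + 1, y)}, {(x, y + 1), (x + 1, y + 1)},
      {(x, y), (x, y + 1)}, {(x + 1, y), (x + 1, y + 1)}} \<inter> sc_E L)"

text \<open>Symmetric difference, and its iterate over a (finite) family of plaquettes:
  an edge lies in the iterated symmetric difference iff it lies in an odd
  number of the boundaries.\<close>
definition symdiff :: "'a set \<Rightarrow> 'a set \<Rightarrow> 'a set" (infixl "\<oplus>" 65) where
  "A \<oplus> C = (A - C) \<union> (C - A)"

definition sc_pbd_sum :: "nat \<Rightarrow> (nat \<times> nat) set \<Rightarrow> edge set" where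
  "sc_pbd_sum L P = {e. odd (card {f \<in> P. e \<in> sc_pbd L f})}"

definition jdeg :: "edge set \<Rightarrow> vtx \<Rightarrow> nat" where
  "jdeg J v = card {e \<in> J. v \<in> e}"

definition is_Djoin :: "nat \<Rightarrow> vtx set \<Rightarrow> edge set \<Rightarrow> bool" where
  "is_Djoin L D J \<longleftrightarrow> J \<subseteq> sc_E L \<and>
     (\<forall>v \<in> D. odd (jdeg J v)) \<and>
     (\<forall>v \<in> sc_V L - (D \<union> sc_B L). even (jdeg J v))"

definition is_min_Djoin :: "nat \<Rightarrow> vtx set \<Rightarrow> edge set \<Rightarrow> bool" where
  "is_min_Djoin L D J \<longleftrightarrow> is_Djoin L D J \<and>
     (\<forall>J'. is_Djoin L D J' \<longrightarrow> card J \<le> card J')"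

end

theory Submission
  imports Defs
begin

definition hedge :: "vtx \<Rightarrow> edge" where "hedge p = {p, (fst p + 1, snd p)}"
definition vedge :: "vtx \<Rightarrow> edge" where "vedge p = {p, (fst p, snd p + 1)}"

lemma sc_E_alt: "sc_E L = {hedge (x,y) | x y. x < L \<and> y < L} \<union> {vedge (x,y) | x y. 1 \<le> x \<and> x + 1 \<le> L \<and> y + 2 \<le> L}"
  unfolding sc_E_def hedge_def vedge_def by auto

lemma hedge_neq_vedge[simp]: "hedge p \<noteq> vedge q"
  unfolding hedge_def vedge_def by (cases p; cases q) (auto simp: doubleton_eq_iff)

lemma vedge_neq_hedge[simp]: "vedge p \<noteq> hedge q"
  using hedge_neq_vedge by metis

lemma hedge_inj[simp]: "hedge p = hedge q \<longleftrightarrow> p = q"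
  unfolding hedge_def by (cases p; cases q) (auto simp: doubleton_eq_iff)

lemma vedge_inj[simp]: "vedge p = vedge q \<longleftrightarrow> p = q"
  unfolding vedge_def by (cases p; cases q) (auto simp: doubleton_eq_iff)

lemma mem_hedge: "v \<in> hedge p \<longleftrightarrow> v = p \<or> v = (fst p + 1, snd p)"
  unfolding hedge_def by auto
lemma mem_vedge: "v \<in> vedge p \<longleftrightarrow> v = p \<or> v = (fst p, snd p + 1)"
  unfolding vedge_def by auto

definition pb4 :: "nat \<times> nat \<Rightarrow> edge set" where
  "pb4 f = {hedge f, hedge (fst f, snd f + 1), vedge f, vedge (fst f + 1, snd f)}"

lemma sc_pbd_pb4: "sc_pbd L f = pb4 f \<inter> sc_E L"
  unfolding sc_pbd_def pb4_def hedge_def vedge_def by (cases f) auto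

lemma card_pb4: "card (pb4 f) = 4"
  unfolding pb4_def by (cases f) auto

definition crn :: "nat \<times> nat \<Rightarrow> vtx set" where
  "crn f = {f, (fst f + 1, snd f), (fst f, snd f + 1), (fst f + 1, snd f + 1)}"

definition opp :: "nat \<times> nat \<Rightarrow> vtx \<Rightarrow> vtx" where
  "opp f c = (2 * fst f + 1 - fst c, 2 * snd f + 1 - snd c)"

definition atv :: "edge set \<Rightarrow> vtx \<Rightarrow> edge set" where
  "atv S v = {e \<in> S. v \<in> e}"

lemma jdeg_atv: "jdeg J v = card (atv J v)"
  unfolding jdeg_def atv_def by simp

lemma opp_crn: "c \<in> crn f \<Longrightarrow> opp f c \<in> crn f"
  unfolding crn_def opp_def by (cases f) auto

lemma opp_opp: "c \<in> crn f \<Longrightarrow> opp f (opp f c) = c"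
  unfolding crn_def opp_def by (cases f) auto

lemma opp_neq: "c \<in> crn f \<Longrightarrow> opp f c \<noteq> c"
  unfolding crn_def opp_def by (cases f) auto

lemma opp_parity: "c \<in> crn f \<Longrightarrow> (fst (opp f c) + snd (opp f c)) mod 2 = (fst c + snd c) mod 2"
  unfolding crn_def opp_def by (elim insertE; simp; presburger)

lemma crn_same_parity: "c \<in> crn f \<Longrightarrow> u \<in> crn f \<Longrightarrow> (fst u + snd u) mod 2 = (fst c + snd c) mod 2
   \<Longrightarrow> u = c \<or> u = opp f c"
  unfolding crn_def opp_def
  apply (simp only: insert_iff empty_iff)
  apply (elim disjE)
  apply (simp_all add: prod_eq_iff)
  apply presburger+
  done

lemma finite_sc_E: "finite (sc_E L)"
proof -
  have "sc_E L \<subseteq> (\<lambda>p. hedge p) ` ({..L} \<times> {..L}) \<union> (\<lambda>p. vedge p) ` ({..L} \<times> {..L})"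
    unfolding sc_E_alt by auto
  then show ?thesis by (rule finite_subset) auto
qed

lemma sc_E_cases:
  assumes "e \<in> sc_E L"
  obtains x y where "e = hedge (x,y)" "x < L" "y < L"
  | x y where "e = vedge (x,y)" "1 \<le> x" "x + 1 \<le> L" "y + 2 \<le> L"
  using assms unfolding sc_E_alt by blast

definition cand :: "vtx \<Rightarrow> edge set" where
  "cand v = {hedge v, hedge (fst v - 1, snd v), vedge v, vedge (fst v, snd v - 1)}"

lemma card_cand: "card (cand v) \<le> 4"
  unfolding cand_def by (auto simp: card_insert_if)

lemma edge_in_cand:
  assumes "e \<in> sc_E L" "v \<in> e"
  shows "e \<in> cand v"
  using assms(1)
proof (cases rule: sc_E_cases)
  case (1 x y)
  then show ?thesis using assms(2) by (auto simp: cand_def mem_hedge)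
next
  case (2 x y)
  then show ?thesis using assms(2) by (auto simp: cand_def mem_vedge)
qed

lemma atv_sub_cand: "J \<subseteq> sc_E L \<Longrightarrow> atv J v \<subseteq> cand v"
  unfolding atv_def using edge_in_cand by blast

lemma finite_atv: "J \<subseteq> sc_E L \<Longrightarrow> finite (atv J v)"
  unfolding atv_def by (rule finite_subset[OF _ finite_sc_E]) auto

lemma card_atv_le4:
  assumes "J \<subseteq> sc_E L" shows "card (atv J v) \<le> 4"
proof -
  have "card (atv J v) \<le> card (cand v)"
    by (rule card_mono) (auto simp: cand_def dest: atv_sub_cand[OF assms, THEN subsetD])
  then show ?thesis using card_cand[of v] by linarith
qed

lemma atv_pb4_crn:
  assumes "c \<in> crn f"
  shows "atv (pb4 f) c = {hedge (fst f, snd c), vedge (fst c, snd f)}"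
  using assms unfolding atv_def pb4_def crn_def
  by (cases f; cases c) (auto simp: mem_hedge mem_vedge)

lemma atv_pb4_notcrn:
  assumes "v \<notin> crn f"
  shows "atv (pb4 f) v = {}"
  using assms unfolding atv_def pb4_def crn_def
  by (cases f; cases v) (auto simp: mem_hedge mem_vedge)

lemma card_atv_pb4_crn: "c \<in> crn f \<Longrightarrow> card (atv (pb4 f) c) = 2"
  by (simp add: atv_pb4_crn)

lemma atv_pb4_opp_disj:
  assumes "c \<in> crn f"
  shows "atv (pb4 f) c \<inter> atv (pb4 f) (opp f c) = {}"
  using assms opp_crn[OF assms] unfolding atv_pb4_crn[OF assms] atv_pb4_crn[OF opp_crn[OF assms]]
  unfolding crn_def opp_def by (cases f; cases c) auto

lemma pb4_split:
  assumes "c \<in> crn f" "e \<in> pb4 f"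
  shows "c \<in> e \<or> opp f c \<in> e"
  using assms unfolding crn_def opp_def pb4_def
  by (cases f; cases c) (auto simp: mem_hedge mem_vedge)

lemma crn_other:
  assumes "c \<in> crn f" "u \<in> crn f" "u \<noteq> c" "u \<noteq> opp f c"
  shows "u = (fst c, snd (opp f c)) \<or> u = (fst (opp f c), snd c)"
  using assms unfolding crn_def opp_def
  apply (simp only: insert_iff empty_iff)
  apply (elim disjE)
  apply (simp_all add: prod_eq_iff)
  done

lemma atv_pb4_side:
  assumes "c \<in> crn f" "u \<in> crn f" "u \<noteq> c" "u \<noteq> opp f c"
  shows "\<exists>e1 e2. atv (pb4 f) u = {e1, e2} \<and> e1 \<in> atv (pb4 f) c \<and> e2 \<in> atv (pb4 f) (opp f c) \<and> e1 \<noteq> e2"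
proof -
  have cz: "opp f c \<in> crn f" using opp_crn[OF assms(1)] .
  note A = atv_pb4_crn[OF assms(2)] atv_pb4_crn[OF assms(1)] atv_pb4_crn[OF cz]
  from crn_other[OF assms] show ?thesis
  proof
    assume u: "u = (fst c, snd (opp f c))"
    show ?thesis unfolding A(1) unfolding u
      by (rule exI[of _ "vedge (fst c, snd f)"], rule exI[of _ "hedge (fst f, snd (opp f c))"])
         (simp add: A(2,3) insert_commute)
  next
    assume u: "u = (fst (opp f c), snd c)"
    show ?thesis unfolding A(1) unfolding u
      by (rule exI[of _ "hedge (fst f, snd c)"], rule exI[of _ "vedge (fst (opp f c), snd f)"])
         (simp add: A(2,3))
  qed
qed

lemma hedge_in_pb4: "hedge p \<in> pb4 f \<longleftrightarrow> f = p \<or> (1 \<le> snd p \<and> f = (fst p, snd p - 1))"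
  unfolding pb4_def by (cases p; cases f) (auto simp: prod_eq_iff)

lemma vedge_in_pb4: "vedge p \<in> pb4 f \<longleftrightarrow> f = p \<or> (1 \<le> fst p \<and> f = (fst p - 1, snd p))"
  unfolding pb4_def by (cases p; cases f) (auto simp: prod_eq_iff)

lemma pb4_elem: "e \<in> pb4 f \<Longrightarrow> (\<exists>p. e = hedge p) \<or> (\<exists>p. e = vedge p)"
  unfolding pb4_def by auto

lemma pb4_three:
  assumes "e \<in> pb4 f" "e \<in> pb4 g" "e \<in> pb4 h" "f \<noteq> g"
  shows "h = f \<or> h = g"
  using pb4_elem[OF assms(1)]
proof
  assume "\<exists>p. e = hedge p"
  then obtain p where "e = hedge p" by blast
  then show ?thesis using assms by (auto simp: hedge_in_pb4)
next
  assume "\<exists>p. e = vedge p"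
  then obtain p where "e = vedge p" by blast
  then show ?thesis using assms by (auto simp: vedge_in_pb4)
qed

lemma top_in_pb4: "hedge (fst f, snd f + 1) \<in> pb4 f"
  unfolding pb4_def by simp

lemma top_pb4_other:
  assumes "hedge (fst f, snd f + 1) \<in> pb4 g"
  shows "g = f \<or> g = (fst f, snd f + 1)"
  using assms unfolding pb4_def by (cases f; cases g) (auto simp: prod_eq_iff)

lemma sc_pbd_sub: "sc_pbd L f \<subseteq> pb4 f"
  by (simp add: sc_pbd_pb4)

lemma mem_symdiff: "x \<in> A \<oplus> B \<longleftrightarrow> (x \<in> A) \<noteq> (x \<in> B)"
  unfolding symdiff_def by auto

lemma symdiff_comm: "A \<oplus> B = B \<oplus> A"
  unfolding symdiff_def by auto

lemma symdiff_assoc: "(A \<oplus> B) \<oplus> C = A \<oplus> (B \<oplus> C)"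
  unfolding symdiff_def by auto

lemma symdiff_empty[simp]: "A \<oplus> {} = A" "{} \<oplus> A = A"
  unfolding symdiff_def by auto

lemma symdiff_self[simp]: "A \<oplus> A = {}"
  unfolding symdiff_def by auto

lemma finite_symdiff: "finite A \<Longrightarrow> finite B \<Longrightarrow> finite (A \<oplus> B)"
  unfolding symdiff_def by auto

lemma card_symdiff:
  assumes "finite A" "finite B"
  shows "card (A \<oplus> B) + 2 * card (A \<inter> B) = card A + card B"
proof -
  have "A \<oplus> B = (A - B) \<union> (B - A)" unfolding symdiff_def by auto
  moreover have "card ((A - B) \<union> (B - A)) = card (A - B) + card (B - A)"
    by (rule card_Un_disjoint) (use assms in auto)
  moreover have "card A = card (A \<inter> B) + card (A - B)" using card_Int_Diff[OF assms(1)] .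
  moreover have "card B = card (B \<inter> A) + card (B - A)" using card_Int_Diff[OF assms(2)] .
  moreover have "B \<inter> A = A \<inter> B" by auto
  ultimately show ?thesis by simp
qed

lemma atv_symdiff: "atv (A \<oplus> B) v = atv A v \<oplus> atv B v"
  unfolding atv_def symdiff_def by auto

lemma finite_sc_F: "finite (sc_F L)"
  unfolding sc_F_def by (rule finite_subset[of _ "{..<L} \<times> {..<L}"]) auto

lemma sc_pbd_sub_E: "sc_pbd L f \<subseteq> sc_E L"
  by (simp add: sc_pbd_pb4)

lemma pbd_sum_empty[simp]: "sc_pbd_sum L {} = {}"
  unfolding sc_pbd_sum_def by simp

lemma pbd_sum_step:
  assumes "finite Q"
  shows "sc_pbd_sum L (Q \<oplus> {f}) = sc_pbd_sum L Q \<oplus> sc_pbd L f"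
proof (rule set_eqI)
  fix e
  let ?A = "{g \<in> Q. e \<in> sc_pbd L g}"
  let ?B = "{g \<in> Q \<oplus> {f}. e \<in> sc_pbd L g}"
  have fA: "finite ?A" using assms by simp
  have "odd (card ?B) \<longleftrightarrow> odd (card ?A) \<noteq> (e \<in> sc_pbd L f)"
  proof (cases "f \<in> Q")
    case True
    then have "?B = ?A - (if e \<in> sc_pbd L f then {f} else {})"
      unfolding symdiff_def by auto
    moreover have "card (?A - (if e \<in> sc_pbd L f then {f} else {})) = card ?A - (if e \<in> sc_pbd L f then 1 else 0)"
      using True fA by (auto simp: card_Diff_singleton)
    moreover have "e \<in> sc_pbd L f \<Longrightarrow> card ?A \<ge> 1"
      using True fA by (metis (mono_tags, lifting) One_nat_def Suc_leI card_gt_0_iff empty_iff mem_Collect_eq)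
    ultimately show ?thesis by auto
  next
    case False
    then have "?B = ?A \<union> (if e \<in> sc_pbd L f then {f} else {})"
      unfolding symdiff_def by auto
    moreover have "card (?A \<union> (if e \<in> sc_pbd L f then {f} else {})) = card ?A + (if e \<in> sc_pbd L f then 1 else 0)"
      using False fA by auto
    ultimately show ?thesis by auto
  qed
  then show "e \<in> sc_pbd_sum L (Q \<oplus> {f}) \<longleftrightarrow> e \<in> sc_pbd_sum L Q \<oplus> sc_pbd L f"
    unfolding sc_pbd_sum_def mem_symdiff by simp
qed

lemma pbd_sum_sub_E: "sc_pbd_sum L Q \<subseteq> sc_E L"
proof
  fix e assume "e \<in> sc_pbd_sum L Q"
  then have "odd (card {f \<in> Q. e \<in> sc_pbd L f})" unfolding sc_pbd_sum_def by simp
  then have "{f \<in> Q. e \<in> sc_pbd L f} \<noteq> {}" by (metis card.empty even_zero)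
  then show "e \<in> sc_E L" using sc_pbd_sub_E by blast
qed

lemma odd_card_symdiff:
  assumes "finite A" "finite B"
  shows "odd (card (A \<oplus> B)) \<longleftrightarrow> odd (card A) \<noteq> odd (card B)"
  using card_symdiff[OF assms] by (metis even_add even_mult_iff even_numeral)

lemma atv_pbd_even:
  assumes "f \<in> sc_F L" "v \<in> sc_V L - sc_B L"
  shows "even (card (atv (sc_pbd L f) v))"
proof (cases "v \<in> crn f")
  case True
  have "atv (sc_pbd L f) v = atv (pb4 f) v \<inter> sc_E L"
    unfolding sc_pbd_pb4 atv_def by auto
  also have "\<dots> = atv (pb4 f) v"
  proof -
    have "hedge (fst f, snd v) \<in> sc_E L" "vedge (fst v, snd f) \<in> sc_E L"
      using assms True unfolding sc_F_def sc_V_def sc_B_def crn_def sc_E_alt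
      by (cases f; cases v; auto)+
    then show ?thesis using atv_pb4_crn[OF True] by auto
  qed
  finally show ?thesis using atv_pb4_crn[OF True] by simp
next
  case False
  have "atv (sc_pbd L f) v = {}"
    using atv_pb4_notcrn[OF False] sc_pbd_sub[of L f] unfolding atv_def by auto
  then show ?thesis by simp
qed

lemma Djoin_flip:
  assumes "is_Djoin L D J" "f \<in> sc_F L" "D \<subseteq> sc_V L - sc_B L"
  shows "is_Djoin L D (J \<oplus> sc_pbd L f)"
proof -
  have JE: "J \<subseteq> sc_E L" using assms(1) unfolding is_Djoin_def by simp
  have fin: "\<And>v. finite (atv J v)" "\<And>v. finite (atv (sc_pbd L f) v)"
    using finite_atv[OF JE] finite_atv[OF sc_pbd_sub_E] by auto
  have sub: "J \<oplus> sc_pbd L f \<subseteq> sc_E L" using JE sc_pbd_sub_E unfolding symdiff_def by blast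
  have par: "\<And>v. v \<in> sc_V L - sc_B L \<Longrightarrow> odd (jdeg (J \<oplus> sc_pbd L f) v) \<longleftrightarrow> odd (jdeg J v)"
    unfolding jdeg_atv atv_symdiff using odd_card_symdiff[OF fin] atv_pbd_even[OF assms(2)] by blast
  show ?thesis
    using assms(1,3) sub par unfolding is_Djoin_def by blast
qed

lemma finite_J: "J \<subseteq> sc_E L \<Longrightarrow> finite J"
  using finite_sc_E finite_subset by blast

lemma Djoin_pbd_sum:
  assumes "is_Djoin L D J" "Q \<subseteq> sc_F L" "D \<subseteq> sc_V L - sc_B L"
  shows "is_Djoin L D (J \<oplus> sc_pbd_sum L Q)"
proof -
  have "finite Q" using assms(2) finite_sc_F finite_subset by blast
  then show ?thesis using assms(2)
  proof (induction Q rule: finite_induct)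
    case empty
    then show ?case using assms(1) by simp
  next
    case (insert f Q)
    have eq: "insert f Q = Q \<oplus> {f}" using insert(2) unfolding symdiff_def by auto
    have "J \<oplus> sc_pbd_sum L (insert f Q) = (J \<oplus> sc_pbd_sum L Q) \<oplus> sc_pbd L f"
      unfolding eq pbd_sum_step[OF insert(1)] symdiff_assoc ..
    moreover have "is_Djoin L D (J \<oplus> sc_pbd_sum L Q)" using insert by simp
    ultimately show ?case using Djoin_flip insert(4) assms(3) by simp
  qed
qed

definition Reach :: "nat \<Rightarrow> edge set \<Rightarrow> edge set \<Rightarrow> bool" where
  "Reach L J0 J \<longleftrightarrow> (\<exists>Q. Q \<subseteq> sc_F L \<and> J = J0 \<oplus> sc_pbd_sum L Q) \<and> card J = card J0"

lemma Reach_refl: "Reach L J0 J0"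
  unfolding Reach_def by (rule conjI, rule exI[of _ "{}"]) auto

lemma Reach_flip:
  assumes "Reach L J0 J" "f \<in> sc_F L"
  shows "\<exists>Q. Q \<subseteq> sc_F L \<and> J \<oplus> sc_pbd L f = J0 \<oplus> sc_pbd_sum L Q"
proof -
  obtain Q where Q: "Q \<subseteq> sc_F L" "J = J0 \<oplus> sc_pbd_sum L Q" using assms(1) unfolding Reach_def by blast
  have fQ: "finite Q" using Q(1) finite_sc_F finite_subset by blast
  have "J \<oplus> sc_pbd L f = J0 \<oplus> sc_pbd_sum L (Q \<oplus> {f})"
    unfolding Q(2) pbd_sum_step[OF fQ] symdiff_assoc ..
  moreover have "Q \<oplus> {f} \<subseteq> sc_F L" using Q(1) assms(2) unfolding symdiff_def by auto
  ultimately show ?thesis by blast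
qed

lemma Reach_min:
  assumes "is_min_Djoin L D J0" "D \<subseteq> sc_V L - sc_B L" "Q \<subseteq> sc_F L"
  shows "card J0 \<le> card (J0 \<oplus> sc_pbd_sum L Q)"
  using assms Djoin_pbd_sum unfolding is_min_Djoin_def by blast

lemma Reach_locmin:
  assumes "is_min_Djoin L D J0" "D \<subseteq> sc_V L - sc_B L" "Reach L J0 J" "f \<in> sc_F L"
  shows "card J \<le> card (J \<oplus> sc_pbd L f)"
proof -
  obtain Q where "Q \<subseteq> sc_F L" "J \<oplus> sc_pbd L f = J0 \<oplus> sc_pbd_sum L Q"
    using Reach_flip[OF assms(3,4)] by blast
  then show ?thesis using Reach_min[OF assms(1,2)] assms(3) unfolding Reach_def by metis
qed

lemma Reach_Djoin:
  assumes "is_min_Djoin L D J0" "D \<subseteq> sc_V L - sc_B L" "Reach L J0 J"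
  shows "is_Djoin L D J"
  using assms Djoin_pbd_sum unfolding Reach_def is_min_Djoin_def by blast

lemma flip_corner:
  assumes JE: "J \<subseteq> sc_E L" and lm: "card J \<le> card (J \<oplus> sc_pbd L f)"
    and c: "c \<in> crn f" and A: "atv (pb4 f) c \<subseteq> J"
  shows "pb4 f \<subseteq> sc_E L" "atv (pb4 f) (opp f c) \<inter> J = {}" "card (J \<oplus> pb4 f) = card J"
proof -
  let ?S = "sc_pbd L f"
  let ?A = "atv (pb4 f) c"
  have fJ: "finite J" using finite_J[OF JE] .
  have fpb: "finite (pb4 f)" unfolding pb4_def by simp
  have fS: "finite ?S" using sc_pbd_sub[of L f] fpb finite_subset by blast
  have cS: "card ?S \<le> 4" using card_mono[OF fpb sc_pbd_sub[of L f]] card_pb4[of f] by simp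
  have cA: "card ?A = 2" using card_atv_pb4_crn[OF c] .
  have AS: "?A \<subseteq> J \<inter> ?S" using A JE unfolding sc_pbd_pb4 atv_def by auto
  have cJS: "2 \<le> card (J \<inter> ?S)" using card_mono[OF _ AS] fJ cA by simp
  have key: "card (J \<oplus> ?S) + 2 * card (J \<inter> ?S) = card J + card ?S" using card_symdiff[OF fJ fS] .
  have cJS2: "card (J \<inter> ?S) = 2" and cS4: "card ?S = 4" using key lm cS cJS by linarith+
  have Seq: "?S = pb4 f" using card_subset_eq[OF fpb sc_pbd_sub[of L f]] cS4 card_pb4[of f] by simp
  then show "pb4 f \<subseteq> sc_E L" using sc_pbd_sub_E[of L f] by simp
  have JSA: "J \<inter> ?S = ?A" using card_subset_eq[OF _ AS] fJ cA cJS2 by (metis finite_Int)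
  show "atv (pb4 f) (opp f c) \<inter> J = {}"
  proof -
    have "atv (pb4 f) (opp f c) \<inter> J \<subseteq> ?A" using JSA Seq unfolding atv_def by auto
    then show ?thesis using atv_pb4_opp_disj[OF c] by auto
  qed
  show "card (J \<oplus> pb4 f) = card J" using key Seq cJS2 cS4 by simp
qed

lemma flip_deg:
  assumes JE: "J \<subseteq> sc_E L" and c: "c \<in> crn f" and A: "atv (pb4 f) c \<subseteq> J"
    and Z: "atv (pb4 f) (opp f c) \<inter> J = {}"
  shows "card (atv (J \<oplus> pb4 f) c) + 2 = card (atv J c)"
    "card (atv (J \<oplus> pb4 f) (opp f c)) = card (atv J (opp f c)) + 2"
    "u \<noteq> c \<Longrightarrow> u \<noteq> opp f c \<Longrightarrow> card (atv (J \<oplus> pb4 f) u) = card (atv J u)"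
proof -
  have fX: "\<And>u. finite (atv J u)" using finite_atv[OF JE] .
  have fY: "\<And>u. finite (atv (pb4 f) u)" unfolding atv_def pb4_def by simp
  have K: "\<And>u. card (atv (J \<oplus> pb4 f) u) + 2 * card (atv J u \<inter> atv (pb4 f) u) = card (atv J u) + card (atv (pb4 f) u)"
    unfolding atv_symdiff using card_symdiff[OF fX fY] .
  have "atv J c \<inter> atv (pb4 f) c = atv (pb4 f) c" using A unfolding atv_def by auto
  then show "card (atv (J \<oplus> pb4 f) c) + 2 = card (atv J c)"
    using K[of c] card_atv_pb4_crn[OF c] by simp
  have "atv J (opp f c) \<inter> atv (pb4 f) (opp f c) = {}" using Z unfolding atv_def by auto
  then show "card (atv (J \<oplus> pb4 f) (opp f c)) = card (atv J (opp f c)) + 2"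
    using K[of "opp f c"] card_atv_pb4_crn[OF opp_crn[OF c]] by simp
  assume u: "u \<noteq> c" "u \<noteq> opp f c"
  show "card (atv (J \<oplus> pb4 f) u) = card (atv J u)"
  proof (cases "u \<in> crn f")
    case True
    obtain e1 e2 where E: "atv (pb4 f) u = {e1, e2}" "e1 \<in> atv (pb4 f) c" "e2 \<in> atv (pb4 f) (opp f c)" "e1 \<noteq> e2"
      using atv_pb4_side[OF c True u] by blast
    have "e1 \<in> J" using E(2) A by auto
    moreover have "e2 \<notin> J" using E(3) Z by auto
    moreover have "u \<in> e1" "u \<in> e2" using E(1) unfolding atv_def by auto
    ultimately have "atv J u \<inter> atv (pb4 f) u = {e1}" using E(1,4) unfolding atv_def by auto
    then show ?thesis using K[of u] E(1,4) by simp
  next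
    case False
    then show ?thesis using K[of u] atv_pb4_notcrn[OF False] by simp
  qed
qed

lemma deg_le4: "is_Djoin L D J \<Longrightarrow> card (atv J v) \<le> 4"
  unfolding is_Djoin_def using card_atv_le4 by blast

lemma deg_D_odd: "is_Djoin L D J \<Longrightarrow> v \<in> D \<Longrightarrow> odd (card (atv J v))"
  unfolding is_Djoin_def jdeg_atv by blast

lemma deg_D_3:
  assumes "is_Djoin L D J" "v \<in> D" "card (atv J v) \<noteq> 1"
  shows "card (atv J v) = 3"
proof -
  have "odd (card (atv J v))" "card (atv J v) \<le> 4" using deg_D_odd[OF assms(1,2)] deg_le4[OF assms(1)] by auto
  then show ?thesis using assms(3) by presburger
qed

lemma deg_far_one:
  assumes JE: "J \<subseteq> sc_E L" and z: "z \<in> crn f" and pE: "pb4 f \<subseteq> sc_E L"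
    and Z: "atv (pb4 f) z \<inter> J = {}" and od: "odd (card (atv J z))"
  shows "card (atv J z) = 1"
proof -
  have s1: "atv J z \<subseteq> cand z" using atv_sub_cand[OF JE] .
  have s2: "atv (pb4 f) z \<subseteq> cand z" using atv_sub_cand[OF pE] .
  have d: "atv J z \<inter> atv (pb4 f) z = {}" using Z unfolding atv_def by auto
  have fc: "finite (cand z)" unfolding cand_def by simp
  have "card (atv J z \<union> atv (pb4 f) z) \<le> card (cand z)" using s1 s2 fc by (simp add: card_mono)
  moreover have "card (atv J z \<union> atv (pb4 f) z) = card (atv J z) + card (atv (pb4 f) z)"
    using card_Un_disjoint[OF finite_subset[OF s1 fc] finite_subset[OF s2 fc] d] .
  ultimately have "card (atv J z) \<le> 2" using card_cand[of z] card_atv_pb4_crn[OF z] by linarith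
  then show ?thesis using od by presburger
qed

lemma hedge_in_E: "hedge p \<in> sc_E L \<longleftrightarrow> fst p < L \<and> snd p < L"
  unfolding sc_E_alt by (cases p) auto

lemma vedge_in_E: "vedge p \<in> sc_E L \<longleftrightarrow> 1 \<le> fst p \<and> fst p + 1 \<le> L \<and> snd p + 2 \<le> L"
  unfolding sc_E_alt by (cases p) auto

lemma crn_iff: "u \<in> crn f \<longleftrightarrow> (fst u = fst f \<or> fst u = fst f + 1) \<and> (snd u = snd f \<or> snd u = snd f + 1)"
  by (cases u; cases f) (auto simp: crn_def)

lemma span:
  assumes "hedge (a, snd v) \<in> sc_E L" "vedge (fst v, b) \<in> sc_E L"
    "v \<in> hedge (a, snd v)" "v \<in> vedge (fst v, b)"
  shows "(a,b) \<in> sc_F L" "v \<in> crn (a,b)" "atv (pb4 (a,b)) v = {hedge (a, snd v), vedge (fst v, b)}"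
proof -
  have x: "fst v = a \<or> fst v = a + 1" using assms(3) by (cases v) (auto simp: mem_hedge)
  have y: "snd v = b \<or> snd v = b + 1" using assms(4) by (cases v) (auto simp: mem_vedge)
  show "(a,b) \<in> sc_F L" using assms(1,2) unfolding hedge_in_E vedge_in_E sc_F_def by simp
  show c: "v \<in> crn (a,b)" using x y crn_iff by simp
  show "atv (pb4 (a,b)) v = {hedge (a, snd v), vedge (fst v, b)}" using atv_pb4_crn[OF c] by simp
qed

lemma next_plaq:
  assumes JE: "J \<subseteq> sc_E L" and f: "f \<in> sc_F L" and z: "z \<in> crn f"
    and A: "atv (pb4 f) z \<subseteq> J" and d3: "card (atv J z) = 3" and pE: "pb4 f \<subseteq> sc_E L"
  shows "\<exists>g. g \<in> sc_F L \<and> g \<noteq> f \<and> z \<in> crn g \<and> atv (pb4 g) z \<subseteq> J \<and> (\<exists>e. e \<in> pb4 f \<and> e \<in> pb4 g \<and> z \<in> e)"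
proof -
  let ?hf = "hedge (fst f, snd z)" and ?vf = "vedge (fst z, snd f)"
  have Aeq: "atv (pb4 f) z = {?hf, ?vf}" using atv_pb4_crn[OF z] .
  have hfJ: "?hf \<in> J" and vfJ: "?vf \<in> J" using A Aeq by auto
  have hfE: "?hf \<in> sc_E L" and vfE: "?vf \<in> sc_E L" using hfJ vfJ JE by auto
  have zhf: "z \<in> ?hf" and zvf: "z \<in> ?vf" using Aeq unfolding atv_def by auto
  have hfp: "?hf \<in> pb4 f" and vfp: "?vf \<in> pb4 f" using Aeq unfolding atv_def by auto
  have sub: "atv (pb4 f) z \<subseteq> atv J z" using A unfolding atv_def by auto
  have "\<not> atv J z \<subseteq> atv (pb4 f) z"
  proof
    assume a: "atv J z \<subseteq> atv (pb4 f) z"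
    have "finite (atv (pb4 f) z)" by (simp add: Aeq)
    then have "card (atv J z) \<le> card (atv (pb4 f) z)" using a by (rule card_mono)
    then show False using d3 card_atv_pb4_crn[OF z] by simp
  qed
  then obtain e' where e': "e' \<in> atv J z" "e' \<notin> atv (pb4 f) z" by blast
  have e'E: "e' \<in> sc_E L" and ze': "z \<in> e'" and e'J: "e' \<in> J" using e' JE unfolding atv_def by auto
  from e'E show ?thesis
  proof (cases rule: sc_E_cases)
    case (1 x y)
    have yz: "y = snd z" using ze' 1(1) by (auto simp: mem_hedge)
    have xne: "x \<noteq> fst f" using e'(2) 1(1) yz Aeq by auto
    have e'eq: "e' = hedge (x, snd z)" using 1(1) yz by simp
    note S = span[of x z L "snd f", folded e'eq]
    have S1: "(x, snd f) \<in> sc_F L" "z \<in> crn (x, snd f)" "atv (pb4 (x, snd f)) z = {e', ?vf}"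
      using S e'E vfE ze' zvf by auto
    show ?thesis
      apply (rule exI[of _ "(x, snd f)"])
      using S1 xne e'J vfJ vfp zvf unfolding atv_def by (auto simp: prod_eq_iff)
  next
    case (2 x y)
    have xz: "x = fst z" using ze' 2(1) by (auto simp: mem_vedge)
    have yne: "y \<noteq> snd f" using e'(2) 2(1) xz Aeq by auto
    have e'eq: "e' = vedge (fst z, y)" using 2(1) xz by simp
    note S = span[of "fst f" z L y, folded e'eq]
    have S1: "(fst f, y) \<in> sc_F L" "z \<in> crn (fst f, y)" "atv (pb4 (fst f, y)) z = {?hf, e'}"
      using S e'E hfE ze' zhf by auto
    show ?thesis
      apply (rule exI[of _ "(fst f, y)"])
      using S1 yne e'J hfJ hfp zhf unfolding atv_def by (auto simp: prod_eq_iff)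
  qed
qed

lemma init_plaq:
  assumes JE: "J \<subseteq> sc_E L" and d3: "card (atv J v) = 3"
  shows "\<exists>f. f \<in> sc_F L \<and> v \<in> crn f \<and> atv (pb4 f) v \<subseteq> J"
proof -
  let ?H = "{hedge v, hedge (fst v - 1, snd v)}" and ?W = "{vedge v, vedge (fst v, snd v - 1)}"
  have ceq: "cand v = ?H \<union> ?W" unfolding cand_def by blast
  have sub: "atv J v \<subseteq> ?H \<union> ?W" using atv_sub_cand[OF JE, of v] unfolding ceq .
  have cH: "card ?H \<le> 2" and cW: "card ?W \<le> 2" by (auto simp: card_insert_if)
  have "\<not> atv J v \<subseteq> ?W"
  proof
    assume "atv J v \<subseteq> ?W" then have "card (atv J v) \<le> card ?W" by (intro card_mono) auto
    then show False using cW d3 by simp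
  qed
  then obtain h where h: "h \<in> atv J v" "h \<in> ?H" using sub by blast
  have "\<not> atv J v \<subseteq> ?H"
  proof
    assume "atv J v \<subseteq> ?H" then have "card (atv J v) \<le> card ?H" by (intro card_mono) auto
    then show False using cH d3 by simp
  qed
  then obtain w where w: "w \<in> atv J v" "w \<in> ?W" using sub by blast
  have "h = hedge (fst v, snd v) \<or> h = hedge (fst v - 1, snd v)" using h(2) by simp
  then obtain a where ha: "h = hedge (a, snd v)" by blast
  have "w = vedge (fst v, snd v) \<or> w = vedge (fst v, snd v - 1)" using w(2) by simp
  then obtain b where wb: "w = vedge (fst v, b)" by blast
  have hE: "h \<in> sc_E L" "v \<in> h" "h \<in> J" using h JE unfolding atv_def by auto
  have wE: "w \<in> sc_E L" "v \<in> w" "w \<in> J" using w JE unfolding atv_def by auto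
  note S = span[of a v L b]
  show ?thesis
    apply (rule exI[of _ "(a,b)"])
    using S hE wE ha wb by auto
qed

definition nbad :: "vtx set \<Rightarrow> edge set \<Rightarrow> nat" where
  "nbad D J = card {v \<in> D. card (atv J v) \<noteq> 1}"

lemma nbad_flip:
  assumes fD: "finite D" and c: "c \<in> D" "card (atv J c) = 3" "card (atv J' c) = 1"
    and oth: "\<forall>u. u \<noteq> c \<longrightarrow> u \<noteq> z \<longrightarrow> card (atv J' u) = card (atv J u)"
    and zD: "z \<in> D \<longrightarrow> card (atv J z) = 1 \<and> card (atv J' z) = 3" and zc: "z \<noteq> c"
  shows "z \<notin> D \<Longrightarrow> nbad D J' < nbad D J" "z \<in> D \<Longrightarrow> nbad D J' = nbad D J"
proof -
  let ?B = "{v \<in> D. card (atv J v) \<noteq> 1}" and ?B' = "{v \<in> D. card (atv J' v) \<noteq> 1}"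
  have fB: "finite ?B" using fD by simp
  have cB: "c \<in> ?B" using c by simp
  { assume zn: "z \<notin> D"
    have "?B' = ?B - {c}"
    proof (rule set_eqI)
      fix v
      have e: "v \<in> D \<Longrightarrow> v \<noteq> c \<Longrightarrow> card (atv J' v) = card (atv J v)" using oth zn by blast
      show "v \<in> ?B' \<longleftrightarrow> v \<in> ?B - {c}"
      proof (cases "v = c")
        case True then show ?thesis using c by simp
      next
        case False then show ?thesis using e by auto
      qed
    qed
    then show "nbad D J' < nbad D J" unfolding nbad_def using card_Diff1_less[OF fB cB] by simp }
  { assume zi: "z \<in> D"
    have "?B' = insert z (?B - {c})"
    proof (rule set_eqI)
      fix v
      have e: "v \<noteq> z \<Longrightarrow> v \<noteq> c \<Longrightarrow> card (atv J' v) = card (atv J v)" using oth by blast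
      show "v \<in> ?B' \<longleftrightarrow> v \<in> insert z (?B - {c})"
      proof (cases "v = c")
        case True then show ?thesis using c zc by simp
      next
        case False
        show ?thesis
        proof (cases "v = z")
          case True then show ?thesis using zi zD by simp
        next
          case False2: False
          then show ?thesis using e False by auto
        qed
      qed
    qed
    moreover have "z \<notin> ?B - {c}" using zD zi by simp
    ultimately have "card ?B' = Suc (card (?B - {c}))" using fB by simp
    also have "\<dots> = card ?B" using card_Suc_Diff1[OF fB cB] .
    finally show "nbad D J' = nbad D J" unfolding nbad_def . }
qed

lemma toggle:
  assumes H7: "\<And>t. Js (Suc t) = Js t \<oplus> pb4 (fs t)"
  shows "(e \<in> Js (i + d)) \<longleftrightarrow> ((e \<in> Js i) \<longleftrightarrow> even (card {t. i \<le> t \<and> t < i + d \<and> e \<in> pb4 (fs t)}))"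
proof (induction d)
  case 0
  have E: "{t. i \<le> t \<and> t < i + 0 \<and> e \<in> pb4 (fs t)} = {}" by auto
  show ?case unfolding E by simp
next
  case (Suc d)
  let ?S = "{t. i \<le> t \<and> t < i + d \<and> e \<in> pb4 (fs t)}"
  let ?S' = "{t. i \<le> t \<and> t < i + Suc d \<and> e \<in> pb4 (fs t)}"
  have fS: "finite ?S" by (rule finite_subset[of _ "{..<i+d}"]) auto
  have eq: "?S' = ?S \<union> (if e \<in> pb4 (fs (i + d)) then {i + d} else {})" by (auto simp: less_Suc_eq)
  have cS: "card ?S' = card ?S + (if e \<in> pb4 (fs (i + d)) then 1 else 0)"
    unfolding eq using fS by auto
  have "e \<in> Js (i + Suc d) \<longleftrightarrow> (e \<in> Js (i + d)) \<noteq> (e \<in> pb4 (fs (i + d)))"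
    using H7[of "i + d"] by (simp add: mem_symdiff)
  then show ?case using Suc cS by auto
qed

lemma no_inf_walk:
  fixes fs :: "nat \<Rightarrow> nat \<times> nat" and cs :: "nat \<Rightarrow> vtx" and Js :: "nat \<Rightarrow> edge set"
  assumes fin: "finite (range fs)"
    and H1: "\<And>t. cs t \<in> crn (fs t)"
    and H2: "\<And>t. cs (Suc t) = opp (fs t) (cs t)"
    and H3: "\<And>t. fs (Suc t) \<noteq> fs t"
    and H4: "\<And>t. \<exists>e. e \<in> pb4 (fs t) \<and> e \<in> pb4 (fs (Suc t)) \<and> cs (Suc t) \<in> e"
    and H5: "\<And>t. atv (pb4 (fs t)) (cs t) \<subseteq> Js t"
    and H6: "\<And>t. atv (pb4 (fs t)) (cs (Suc t)) \<inter> Js t = {}"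
    and H7: "\<And>t. Js (Suc t) = Js t \<oplus> pb4 (fs t)"
  shows False
proof -
  define cnt where "cnt i j e = card {t. i \<le> t \<and> t < j \<and> e \<in> pb4 (fs t)}" for i j e
  have tog: "\<And>i j e. i \<le> j \<Longrightarrow> (e \<in> Js j) \<longleftrightarrow> ((e \<in> Js i) \<longleftrightarrow> even (cnt i j e))"
  proof -
    fix i j :: nat and e assume "i \<le> j"
    then obtain d where "j = i + d" using le_Suc_ex by blast
    then show "(e \<in> Js j) \<longleftrightarrow> ((e \<in> Js i) \<longleftrightarrow> even (cnt i j e))"
      unfolding cnt_def using toggle[where Js=Js and fs=fs, OF H7] by simp
  qed
  have par: "\<And>t. (fst (cs t) + snd (cs t)) mod 2 = (fst (cs 0) + snd (cs 0)) mod 2"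
  proof -
    fix t show "(fst (cs t) + snd (cs t)) mod 2 = (fst (cs 0) + snd (cs 0)) mod 2"
      by (induction t) (simp_all add: H2 opp_parity[OF H1])
  qed
  have fin2: "finite (snd ` range fs)" using fin by simp
  obtain k where k: "snd (fs k) = Max (snd ` range fs)"
    using Max_in[OF fin2] by auto
  have kmax: "\<And>t. snd (fs t) \<le> snd (fs k)" unfolding k using fin2 by simp
  have ex: "\<exists>j. k < j \<and> fs j \<in> fs ` {k..<j}"
  proof -
    let ?A = "{k..k + card (range fs)}"
    have "\<not> inj_on fs ?A"
    proof
      assume "inj_on fs ?A"
      then have "card ?A \<le> card (range fs)" using card_inj_on_le[OF _ _ fin] by blast
      then show False by simp
    qed
    then obtain a b where ab: "a \<in> ?A" "b \<in> ?A" "a \<noteq> b" "fs a = fs b" unfolding inj_on_def by blast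
    show ?thesis
    proof (cases "a < b")
      case True
      have "a \<in> {k..<b}" using ab True by auto
      then have m: "fs b \<in> fs ` {k..<b}" using ab(4) by (metis image_eqI)
      have "k < b" using ab True by auto
      then show ?thesis using m by blast
    next
      case False
      then have ba: "b < a" using ab(3) by simp
      have "b \<in> {k..<a}" using ab ba by auto
      then have m: "fs a \<in> fs ` {k..<a}" using ab(4) by (metis image_eqI)
      have "k < a" using ab ba by auto
      then show ?thesis using m by blast
    qed
  qed
  define j where "j = (LEAST j. k < j \<and> fs j \<in> fs ` {k..<j})"
  have jP: "k < j \<and> fs j \<in> fs ` {k..<j}" unfolding j_def by (rule LeastI_ex[OF ex])
  have inj: "inj_on fs {k..<j}"
  proof (rule inj_onI, rule ccontr)
    fix a b assume a: "a \<in> {k..<j}" and b: "b \<in> {k..<j}" and e: "fs a = fs b" and ne: "a \<noteq> b"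
    { fix a b assume a: "a \<in> {k..<j}" and b: "b \<in> {k..<j}" and e: "fs a = fs b" and lt: "a < b"
      have "a \<in> {k..<b}" using a lt by auto
      then have "fs b \<in> fs ` {k..<b}" using e by (metis image_eqI)
      then have "k < b \<and> fs b \<in> fs ` {k..<b}" using a lt by auto
      then have "j \<le> b" unfolding j_def by (rule Least_le)
      then have False using b by simp }
    then show False using a b e ne by (metis linorder_neqE_nat)
  qed
  obtain i where i: "k \<le> i" "i < j" "fs j = fs i" using jP by auto
  have ij: "Suc i < j"
  proof (rule ccontr)
    assume "\<not> Suc i < j" then have "j = Suc i" using i by simp
    then show False using H3[of i] i(3) by simp
  qed
  have injD: "\<And>a b. a \<in> {k..<j} \<Longrightarrow> b \<in> {k..<j} \<Longrightarrow> fs a = fs b \<Longrightarrow> a = b"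
    using inj unfolding inj_on_def by blast
  have two: "\<And>a e. k \<le> a \<Longrightarrow> Suc a < j \<Longrightarrow> e \<in> pb4 (fs a) \<Longrightarrow> e \<in> pb4 (fs (Suc a))
              \<Longrightarrow> cnt a j e = 2"
  proof -
    fix a e assume a: "k \<le> a" "Suc a < j" and ea: "e \<in> pb4 (fs a)" "e \<in> pb4 (fs (Suc a))"
    have "{t. a \<le> t \<and> t < j \<and> e \<in> pb4 (fs t)} = {a, Suc a}"
    proof (rule set_eqI, rule iffI)
      fix t assume t: "t \<in> {t. a \<le> t \<and> t < j \<and> e \<in> pb4 (fs t)}"
      then have "fs t = fs a \<or> fs t = fs (Suc a)" using pb4_three[OF ea _ H3[of a, symmetric]] by auto
      then show "t \<in> {a, Suc a}" using injD[of t a] injD[of t "Suc a"] a t by auto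
    next
      fix t assume "t \<in> {a, Suc a}"
      then show "t \<in> {t. a \<le> t \<and> t < j \<and> e \<in> pb4 (fs t)}" using a ea by auto
    qed
    then show "cnt a j e = 2" unfolding cnt_def by simp
  qed
  have csj: "cs j = cs i \<or> cs j = cs (Suc i)"
  proof -
    have a1: "cs j \<in> crn (fs i)" using H1[of j] i(3) by simp
    have a2: "(fst (cs j) + snd (cs j)) mod 2 = (fst (cs i) + snd (cs i)) mod 2" using par[of j] par[of i] by linarith
    show ?thesis using crn_same_parity[OF H1[of i] a1 a2] H2[of i] by simp
  qed
  have ik: "i = k \<and> cs j = cs k"
  proof (cases "cs j = cs (Suc i)")
    case True
    obtain e where e: "e \<in> pb4 (fs i)" "e \<in> pb4 (fs (Suc i))" "cs (Suc i) \<in> e" using H4[of i] by blast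
    have "e \<in> Js j" using H5[of j] e True i(3) unfolding atv_def by auto
    moreover have "e \<notin> Js i" using H6[of i] e unfolding atv_def by auto
    moreover have "cnt i j e = 2" using two[OF i(1) ij e(1,2)] .
    ultimately show ?thesis using tog[of i j e] i(2) by simp
  next
    case False
    then have cj: "cs j = cs i" using csj by simp
    show ?thesis
    proof (cases "i = k")
      case True then show ?thesis using cj by simp
    next
      case False
      then obtain i' where i': "i = Suc i'" "k \<le> i'" using i(1) by (metis le_eq_less_or_eq lessE)
      obtain e where e: "e \<in> pb4 (fs i')" "e \<in> pb4 (fs (Suc i'))" "cs (Suc i') \<in> e" using H4[of i'] by blast
      have "e \<in> Js j" using H5[of j] e cj i(3) i'(1) unfolding atv_def by auto
      moreover have "e \<notin> Js i'" using H6[of i'] e unfolding atv_def by auto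
      moreover have "cnt i' j e = 2" using two[OF i'(2) _ e(1,2)] i(2) i'(1) by simp
      ultimately show ?thesis using tog[of i' j e] i(2) i'(1) by simp
    qed
  qed
  let ?te = "hedge (fst (fs k), snd (fs k) + 1)"
  have te: "?te \<in> pb4 (fs k)" by (rule top_in_pb4)
  have fjk: "fs j = fs k" and cjk: "cs j = cs k" using ik i(3) by auto
  have csuc: "cs (Suc j) = cs (Suc k)" using H2[of j] H2[of k] fjk cjk by simp
  have same: "?te \<in> Js j \<longleftrightarrow> ?te \<in> Js k"
  proof (cases "cs k \<in> ?te")
    case True
    have "?te \<in> Js k" using H5[of k] te True unfolding atv_def by auto
    moreover have "?te \<in> Js j" using H5[of j] te True fjk cjk unfolding atv_def by auto
    ultimately show ?thesis by simp
  next
    case False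
    then have "cs (Suc k) \<in> ?te" using pb4_split[OF H1[of k] te] H2[of k] by simp
    then have "?te \<notin> Js k" "?te \<notin> Js j" using H6[of k] H6[of j] te fjk csuc unfolding atv_def by auto
    then show ?thesis by simp
  qed
  have ev: "even (cnt k j ?te)" using tog[of k j ?te] same jP by auto
  let ?T = "{t. k \<le> t \<and> t < j \<and> ?te \<in> pb4 (fs t)}"
  have kT: "k \<in> ?T" using jP te by simp
  have "?T \<noteq> {k}"
  proof
    assume "?T = {k}" then have "cnt k j ?te = 1" unfolding cnt_def by simp
    then show False using ev by simp
  qed
  then obtain t where t: "t \<in> ?T" "t \<noteq> k" using kT by blast
  have "fs t \<noteq> fs k" using injD[of t k] t jP by auto
  then have "fs t = (fst (fs k), snd (fs k) + 1)" using top_pb4_other[of "fs k" "fs t"] t by auto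
  then show False using kmax[of t] by simp
qed

lemma finite_sc_V: "finite (sc_V L)"
  unfolding sc_V_def by (rule finite_subset[of _ "{..L} \<times> {..<L}"]) auto

definition Good :: "nat \<Rightarrow> edge set \<Rightarrow> vtx \<Rightarrow> nat \<times> nat \<Rightarrow> nat \<times> nat \<Rightarrow> bool" where
  "Good L K z f g \<longleftrightarrow> g \<in> sc_F L \<and> g \<noteq> f \<and> z \<in> crn g \<and> atv (pb4 g) z \<subseteq> K \<and>
     (\<exists>e. e \<in> pb4 f \<and> e \<in> pb4 g \<and> z \<in> e)"

lemma walk_step:
  assumes m: "is_min_Djoin L D J0" and DV: "D \<subseteq> sc_V L - sc_B L"
    and H: "\<And>J'. Reach L J0 J' \<Longrightarrow> \<not> nbad D J' < N"
    and R: "Reach L J0 K" and nb: "nbad D K = N" and c: "c \<in> D" "card (atv K c) = 3"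
    and f: "f \<in> sc_F L" "c \<in> crn f" "atv (pb4 f) c \<subseteq> K"
  shows "pb4 f \<subseteq> sc_E L" "atv (pb4 f) (opp f c) \<inter> K = {}"
    "Reach L J0 (K \<oplus> pb4 f)" "nbad D (K \<oplus> pb4 f) = N" "opp f c \<in> D"
    "card (atv (K \<oplus> pb4 f) (opp f c)) = 3"
    "\<exists>g. Good L (K \<oplus> pb4 f) (opp f c) f g"
proof -
  have DJ: "is_Djoin L D K" using Reach_Djoin[OF m DV R] .
  have KE: "K \<subseteq> sc_E L" using DJ unfolding is_Djoin_def by simp
  have lm: "card K \<le> card (K \<oplus> sc_pbd L f)" using Reach_locmin[OF m DV R f(1)] .
  note fc = flip_corner[OF KE lm f(2,3)]
  show pE: "pb4 f \<subseteq> sc_E L" and far: "atv (pb4 f) (opp f c) \<inter> K = {}" using fc by auto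
  have Seq: "sc_pbd L f = pb4 f" using pE unfolding sc_pbd_pb4 by auto
  obtain Q where Q: "Q \<subseteq> sc_F L" "K \<oplus> pb4 f = J0 \<oplus> sc_pbd_sum L Q"
    using Reach_flip[OF R f(1)] unfolding Seq by blast
  show R': "Reach L J0 (K \<oplus> pb4 f)"
    unfolding Reach_def using Q fc(3) R unfolding Reach_def by auto
  have DJ': "is_Djoin L D (K \<oplus> pb4 f)" using Reach_Djoin[OF m DV R'] .
  have K'E: "K \<oplus> pb4 f \<subseteq> sc_E L" using DJ' unfolding is_Djoin_def by simp
  note fd = flip_deg[OF KE f(2,3) far]
  let ?z = "opp f c"
  have zc: "?z \<noteq> c" using opp_neq[OF f(2)] .
  have fD: "finite D" using DV finite_sc_V finite_subset by blast
  have c1: "card (atv (K \<oplus> pb4 f) c) = 1" using fd(1) c(2) by simp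
  have zD1: "?z \<in> D \<longrightarrow> card (atv K ?z) = 1 \<and> card (atv (K \<oplus> pb4 f) ?z) = 3"
  proof
    assume zD: "?z \<in> D"
    have "card (atv K ?z) = 1"
      using deg_far_one[OF KE opp_crn[OF f(2)] pE far deg_D_odd[OF DJ zD]] .
    then show "card (atv K ?z) = 1 \<and> card (atv (K \<oplus> pb4 f) ?z) = 3" using fd(2) by simp
  qed
  have oth: "\<forall>u. u \<noteq> c \<longrightarrow> u \<noteq> ?z \<longrightarrow> card (atv (K \<oplus> pb4 f) u) = card (atv K u)"
    using fd(3) by blast
  note nf = nbad_flip[OF fD c c1 oth zD1 zc]
  show zD: "?z \<in> D"
  proof (rule ccontr)
    assume "?z \<notin> D"
    then have "nbad D (K \<oplus> pb4 f) < N" using nf(1) nb by simp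
    then show False using H[OF R'] by simp
  qed
  show "nbad D (K \<oplus> pb4 f) = N" using nf(2)[OF zD] nb by simp
  show z3: "card (atv (K \<oplus> pb4 f) ?z) = 3" using zD1 zD by simp
  have A': "atv (pb4 f) ?z \<subseteq> K \<oplus> pb4 f" using far unfolding atv_def symdiff_def by auto
  show "\<exists>g. Good L (K \<oplus> pb4 f) ?z f g"
    using next_plaq[OF K'E f(1) opp_crn[OF f(2)] A' z3 pE] unfolding Good_def by blast
qed

definition wnext :: "nat \<Rightarrow> edge set \<times> vtx \<times> (nat \<times> nat) \<Rightarrow> edge set \<times> vtx \<times> (nat \<times> nat)" where
  "wnext L s = (case s of (K, c, f) \<Rightarrow>
     (K \<oplus> pb4 f, opp f c, SOME g. Good L (K \<oplus> pb4 f) (opp f c) f g))"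

lemma reduce:
  assumes m: "is_min_Djoin L D J0" and DV: "D \<subseteq> sc_V L - sc_B L"
    and R: "Reach L J0 J" and v: "v \<in> D" "card (atv J v) \<noteq> 1"
  shows "\<exists>J'. Reach L J0 J' \<and> nbad D J' < nbad D J"
proof (rule ccontr)
  assume nH: "\<not> (\<exists>J'. Reach L J0 J' \<and> nbad D J' < nbad D J)"
  let ?N = "nbad D J"
  have H: "\<And>J'. Reach L J0 J' \<Longrightarrow> \<not> nbad D J' < ?N" using nH by blast
  have DJ: "is_Djoin L D J" using Reach_Djoin[OF m DV R] .
  have JE: "J \<subseteq> sc_E L" using DJ unfolding is_Djoin_def by simp
  have v3: "card (atv J v) = 3" using deg_D_3[OF DJ v] .
  define f0 where "f0 = (SOME f. f \<in> sc_F L \<and> v \<in> crn f \<and> atv (pb4 f) v \<subseteq> J)"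
  have f0: "f0 \<in> sc_F L \<and> v \<in> crn f0 \<and> atv (pb4 f0) v \<subseteq> J"
    unfolding f0_def using init_plaq[OF JE v3] by (rule someI_ex)
  define st where "st t = (wnext L ^^ t) (J, v, f0)" for t
  define Inv where "Inv s \<longleftrightarrow> (case s of (K, c, f) \<Rightarrow> Reach L J0 K \<and> nbad D K = ?N \<and> c \<in> D \<and>
      card (atv K c) = 3 \<and> f \<in> sc_F L \<and> c \<in> crn f \<and> atv (pb4 f) c \<subseteq> K)" for s
  have st0: "st 0 = (J, v, f0)" unfolding st_def by simp
  have stS: "\<And>t. st (Suc t) = wnext L (st t)" unfolding st_def by simp
  have inv: "\<And>t. Inv (st t)"
  proof -
    fix t show "Inv (st t)"
    proof (induction t)
      case 0
      then show ?case unfolding st0 Inv_def using R v(1) v3 f0 by simp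
    next
      case (Suc t)
      obtain K c f where s: "st t = (K, c, f)" by (cases "st t") auto
      have I: "Reach L J0 K" "nbad D K = ?N" "c \<in> D" "card (atv K c) = 3" "f \<in> sc_F L" "c \<in> crn f" "atv (pb4 f) c \<subseteq> K"
        using Suc unfolding s Inv_def by auto
      note ws = walk_step[OF m DV H I]
      define g where "g = (SOME g. Good L (K \<oplus> pb4 f) (opp f c) f g)"
      have g: "Good L (K \<oplus> pb4 f) (opp f c) f g" unfolding g_def using ws(7) by (rule someI_ex)
      have "st (Suc t) = (K \<oplus> pb4 f, opp f c, g)" unfolding stS s wnext_def g_def by simp
      then show ?case unfolding Inv_def using ws g unfolding Good_def by simp
    qed
  qed
  define Js where "Js t = fst (st t)" for t
  define cs where "cs t = fst (snd (st t))" for t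
  define fs where "fs t = snd (snd (st t))" for t
  have stt: "\<And>t. st t = (Js t, cs t, fs t)" unfolding Js_def cs_def fs_def by simp
  have I: "\<And>t. Reach L J0 (Js t) \<and> nbad D (Js t) = ?N \<and> cs t \<in> D \<and> card (atv (Js t) (cs t)) = 3 \<and>
      fs t \<in> sc_F L \<and> cs t \<in> crn (fs t) \<and> atv (pb4 (fs t)) (cs t) \<subseteq> Js t"
  proof -
    fix t
    have "Inv (Js t, cs t, fs t)" using inv[of t] unfolding stt .
    then show "Reach L J0 (Js t) \<and> nbad D (Js t) = ?N \<and> cs t \<in> D \<and> card (atv (Js t) (cs t)) = 3 \<and>
      fs t \<in> sc_F L \<and> cs t \<in> crn (fs t) \<and> atv (pb4 (fs t)) (cs t) \<subseteq> Js t"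
      unfolding Inv_def by simp
  qed
  have nx: "\<And>t. Js (Suc t) = Js t \<oplus> pb4 (fs t) \<and> cs (Suc t) = opp (fs t) (cs t) \<and>
      fs (Suc t) = (SOME g. Good L (Js t \<oplus> pb4 (fs t)) (opp (fs t) (cs t)) (fs t) g)"
  proof -
    fix t
    have "(Js (Suc t), cs (Suc t), fs (Suc t)) = wnext L (Js t, cs t, fs t)" using stS[of t] unfolding stt .
    then show "Js (Suc t) = Js t \<oplus> pb4 (fs t) \<and> cs (Suc t) = opp (fs t) (cs t) \<and>
      fs (Suc t) = (SOME g. Good L (Js t \<oplus> pb4 (fs t)) (opp (fs t) (cs t)) (fs t) g)"
      unfolding wnext_def by simp
  qed
  have W: "\<And>t. atv (pb4 (fs t)) (opp (fs t) (cs t)) \<inter> Js t = {} \<and>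
      Good L (Js t \<oplus> pb4 (fs t)) (opp (fs t) (cs t)) (fs t) (fs (Suc t))"
  proof -
    fix t
    have I': "Reach L J0 (Js t)" "nbad D (Js t) = ?N" "cs t \<in> D" "card (atv (Js t) (cs t)) = 3"
      "fs t \<in> sc_F L" "cs t \<in> crn (fs t)" "atv (pb4 (fs t)) (cs t) \<subseteq> Js t" using I[of t] by auto
    note ws = walk_step[OF m DV H I']
    have "Good L (Js t \<oplus> pb4 (fs t)) (opp (fs t) (cs t)) (fs t) (fs (Suc t))"
      using nx[of t] someI_ex[OF ws(7)] by simp
    then show "atv (pb4 (fs t)) (opp (fs t) (cs t)) \<inter> Js t = {} \<and>
      Good L (Js t \<oplus> pb4 (fs t)) (opp (fs t) (cs t)) (fs t) (fs (Suc t))" using ws(2) by simp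
  qed
  show False
  proof (rule no_inf_walk[of fs cs Js])
    have "range fs \<subseteq> sc_F L" using I by blast
    then show "finite (range fs)" using finite_sc_F finite_subset by blast
    show "\<And>t. cs t \<in> crn (fs t)" using I by blast
    show "\<And>t. cs (Suc t) = opp (fs t) (cs t)" using nx by blast
    show "\<And>t. fs (Suc t) \<noteq> fs t" using W unfolding Good_def by blast
    show "\<And>t. \<exists>e. e \<in> pb4 (fs t) \<and> e \<in> pb4 (fs (Suc t)) \<and> cs (Suc t) \<in> e"
    proof -
      fix t show "\<exists>e. e \<in> pb4 (fs t) \<and> e \<in> pb4 (fs (Suc t)) \<and> cs (Suc t) \<in> e"
        using W[of t] nx[of t] unfolding Good_def by auto
    qed
    show "\<And>t. atv (pb4 (fs t)) (cs t) \<subseteq> Js t" using I by blast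
    show "\<And>t. atv (pb4 (fs t)) (cs (Suc t)) \<inter> Js t = {}"
    proof -
      fix t show "atv (pb4 (fs t)) (cs (Suc t)) \<inter> Js t = {}" using W[of t] nx[of t] by simp
    qed
    show "\<And>t. Js (Suc t) = Js t \<oplus> pb4 (fs t)" using nx by blast
  qed
qed

lemma all_good:
  assumes m: "is_min_Djoin L D J0" and DV: "D \<subseteq> sc_V L - sc_B L"
  shows "\<exists>J'. Reach L J0 J' \<and> (\<forall>v\<in>D. card (atv J' v) = 1)"
proof -
  have main: "\<forall>J. nbad D J = n \<longrightarrow> Reach L J0 J \<longrightarrow> (\<exists>J'. Reach L J0 J' \<and> (\<forall>v\<in>D. card (atv J' v) = 1))" for n
  proof (induction n rule: less_induct)
    case (less n)
    show ?case
    proof (intro allI impI)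
      fix J assume nJ: "nbad D J = n" and R: "Reach L J0 J"
      show "\<exists>J'. Reach L J0 J' \<and> (\<forall>v\<in>D. card (atv J' v) = 1)"
      proof (cases "\<forall>v\<in>D. card (atv J v) = 1")
        case True then show ?thesis using R by blast
      next
        case False
        then obtain v where v: "v \<in> D" "card (atv J v) \<noteq> 1" by blast
        obtain J' where J': "Reach L J0 J'" "nbad D J' < nbad D J" using reduce[OF m DV R v] by blast
        then show ?thesis using less.IH nJ by blast
      qed
    qed
  qed
  then show ?thesis using Reach_refl by blast
qed

lemma Djoin_exists:
  assumes DV: "D \<subseteq> sc_V L - sc_B L"
  shows "\<exists>J. is_Djoin L D J"
proof -
  define n where "n i y = card {x. (x, y) \<in> D \<and> i < x}" for i y
  define Jd where "Jd = {hedge (i, y) | i y. i < L \<and> y < L \<and> odd (n i y)}"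
  have fD: "finite D" using DV finite_sc_V finite_subset by blast
  have sub: "Jd \<subseteq> sc_E L" unfolding Jd_def using hedge_in_E by auto
  have par: "odd (card (atv Jd (x, y))) \<longleftrightarrow> (x, y) \<in> D" if v: "(x, y) \<in> sc_V L - sc_B L" for x y
  proof -
    have x: "1 \<le> x" "x < L" "y < L" using v unfolding sc_V_def sc_B_def by auto
    have A: "atv Jd (x, y) = (if odd (n x y) then {hedge (x, y)} else {}) \<union>
                           (if odd (n (x - 1) y) then {hedge (x - 1, y)} else {})"
    proof (rule set_eqI)
      fix e
      show "e \<in> atv Jd (x, y) \<longleftrightarrow> e \<in> (if odd (n x y) then {hedge (x, y)} else {}) \<union>
                           (if odd (n (x - 1) y) then {hedge (x - 1, y)} else {})"
      proof
        assume "e \<in> atv Jd (x, y)"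
        then obtain i y' where e: "e = hedge (i, y')" "i < L" "y' < L" "odd (n i y')" "(x, y) \<in> hedge (i, y')"
          unfolding atv_def Jd_def by blast
        then have "(i = x \<and> y' = y) \<or> (i = x - 1 \<and> y' = y)" by (auto simp: mem_hedge)
        then show "e \<in> (if odd (n x y) then {hedge (x, y)} else {}) \<union>
                           (if odd (n (x - 1) y) then {hedge (x - 1, y)} else {})" using e by auto
      next
        assume "e \<in> (if odd (n x y) then {hedge (x, y)} else {}) \<union>
                           (if odd (n (x - 1) y) then {hedge (x - 1, y)} else {})"
        then show "e \<in> atv Jd (x, y)" unfolding atv_def Jd_def using x by (auto simp: mem_hedge split: if_splits)
      qed
    qed
    have ne: "hedge (x, y) \<noteq> hedge (x - 1, y)" using x by simp
    have cA: "card (atv Jd (x, y)) = (if odd (n x y) then 1 else 0) + (if odd (n (x - 1) y) then 1 else 0)"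
      unfolding A using ne by auto
    have S: "{x'. (x', y) \<in> D \<and> x - 1 < x'} = {x'. (x', y) \<in> D \<and> x < x'} \<union> (if (x, y) \<in> D then {x} else {})"
    proof (rule set_eqI)
      fix x' show "x' \<in> {x'. (x', y) \<in> D \<and> x - 1 < x'} \<longleftrightarrow>
          x' \<in> {x'. (x', y) \<in> D \<and> x < x'} \<union> (if (x, y) \<in> D then {x} else {})"
        using x by (cases "x' = x") auto
    qed
    have fS: "finite {x'. (x', y) \<in> D \<and> x < x'}"
      by (rule finite_subset[of _ "fst ` D"]) (use fD in force)+
    have nS: "n (x - 1) y = n x y + (if (x, y) \<in> D then 1 else 0)"
      unfolding n_def S using fS by auto
    show ?thesis unfolding cA nS by auto
  qed
  have "is_Djoin L D Jd"
    unfolding is_Djoin_def jdeg_atv using sub par DV by auto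
  then show ?thesis by blast
qed

lemma min_exists:
  assumes DV: "D \<subseteq> sc_V L - sc_B L"
  shows "\<exists>J0. is_min_Djoin L D J0"
proof -
  obtain Jd where "is_Djoin L D Jd" using Djoin_exists[OF DV] by blast
  then obtain J0 where "is_Djoin L D J0" "\<forall>J'. is_Djoin L D J' \<longrightarrow> card J0 \<le> card J'"
    using ex_has_least_nat[of "is_Djoin L D" Jd card] by blast
  then show ?thesis unfolding is_min_Djoin_def by blast
qed

theorem theorem3p2:
  fixes L :: nat and D :: "vtx set"
  assumes "L \<ge> 3"
    and "D \<subseteq> sc_V L - sc_B L"
  shows "(\<exists>J. is_min_Djoin L D J \<and> (\<forall>v \<in> D. jdeg J v = 1)) \<and>
         (\<forall>J. is_min_Djoin L D J \<longrightarrow>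
            (\<exists>P \<subseteq> sc_F L.
               card (J \<oplus> sc_pbd_sum L P) = card J \<and>
               (\<forall>v \<in> D. jdeg (J \<oplus> sc_pbd_sum L P) v = 1)))"
proof -
  have DV: "D \<subseteq> sc_V L - sc_B L" using assms(2) .
  have part2: "\<forall>J. is_min_Djoin L D J \<longrightarrow>
            (\<exists>P \<subseteq> sc_F L.
               card (J \<oplus> sc_pbd_sum L P) = card J \<and>
               (\<forall>v \<in> D. jdeg (J \<oplus> sc_pbd_sum L P) v = 1))"
  proof (intro allI impI)
    fix J assume m: "is_min_Djoin L D J"
    obtain J' where J': "Reach L J J'" "\<forall>v\<in>D. card (atv J' v) = 1" using all_good[OF m DV] by blast
    obtain Q where Q: "Q \<subseteq> sc_F L" "J' = J \<oplus> sc_pbd_sum L Q" "card J' = card J"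
      using J'(1) unfolding Reach_def by blast
    show "\<exists>P \<subseteq> sc_F L. card (J \<oplus> sc_pbd_sum L P) = card J \<and>
               (\<forall>v \<in> D. jdeg (J \<oplus> sc_pbd_sum L P) v = 1)"
      using Q J'(2) unfolding jdeg_atv by blast
  qed
  obtain J0 where m0: "is_min_Djoin L D J0" using min_exists[OF DV] by blast
  obtain P where P: "P \<subseteq> sc_F L" "card (J0 \<oplus> sc_pbd_sum L P) = card J0"
    "\<forall>v \<in> D. jdeg (J0 \<oplus> sc_pbd_sum L P) v = 1" using part2 m0 by blast
  have "is_Djoin L D (J0 \<oplus> sc_pbd_sum L P)"
    using Djoin_pbd_sum[OF _ P(1) DV] m0 unfolding is_min_Djoin_def by blast
  then have "is_min_Djoin L D (J0 \<oplus> sc_pbd_sum L P)"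
    using m0 P(2) unfolding is_min_Djoin_def by simp
  then show ?thesis using P(3) part2 by blast
qed

end
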